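(* Let $r\ge2$, $\alpha_1,\dots,\alpha_r>0$, $m\ge1$, $f(z)=\mathrm{sgn}(z)\frac{|z|^m}{1+|z|^m}$, and consider $\dot x_1=f(x_r)-\alpha_1x_1$, $\dot x_j=x_{j-1}-\alpha_jx_j$ ($2\le j\le r$). Let $\phi=\prod_{i=1}^r\alpha_i$, $h(z)=f(z)/z$ for $z\ne0$, and $\mathcal{V}_0=(\prod_{i=2}^r\alpha_i,\prod_{i=3}^r\alpha_i,\dots,\alpha_r,1)^T$. Let $z\neq0$ with $h(z)=\phi$ (so that $z\mathcal{V}_0$ is an equilibrium). If $z>0$, then $z\mathcal{V}_0$ is asymptotically stable when $h'(z)<0$ and unstable when $h'(z)>0$. If $z<0$, then $z\mathcal{V}_0$ is asymptotically stable when $h'(z)>0$ and unstable when $h'(z)<0$.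
   Context: Unstable means not Lyapunov stable. An equilibrium $p$ is asymptotically stable if there is a neighborhood $N$ of $p$ such that solutions starting in $N$ converge to $p$ uniformly in the initial point in $N$. *)

theory Defs
  imports "HOL-Analysis.Analysis"
begin

text \<open>States of the r-dimensional system are functions nat \<Rightarrow> real of which only the
  coordinates 0..r-1 matter (index i here corresponds to x_{i+1} in the paper).\<close>

definition hillf :: "real \<Rightarrow> real \<Rightarrow> real" where
  "hillf m z = sgn z * (\<bar>z\<bar> powr m / (1 + \<bar>z\<bar> powr m))"

definition hfun :: "real \<Rightarrow> real \<Rightarrow> real" where
  "hfun m z = hillf m z / z"

definition vfield :: "nat \<Rightarrow> (nat \<Rightarrow> real) \<Rightarrow> real \<Rightarrow> (nat \<Rightarrow> real) \<Rightarrow> nat \<Rightarrow> real" where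
  "vfield r \<alpha> m x i =
     (if i = 0 then hillf m (x (r - 1)) - \<alpha> 0 * x 0 else x (i - 1) - \<alpha> i * x i)"

definition distr :: "nat \<Rightarrow> (nat \<Rightarrow> real) \<Rightarrow> (nat \<Rightarrow> real) \<Rightarrow> real" where
  "distr r x y = sqrt (\<Sum>i<r. (x i - y i)\<^sup>2)"

definition is_solution :: "nat \<Rightarrow> (nat \<Rightarrow> real) \<Rightarrow> real \<Rightarrow> (nat \<Rightarrow> real) \<Rightarrow> (real \<Rightarrow> nat \<Rightarrow> real) \<Rightarrow> bool" where
  "is_solution r \<alpha> m x0 y \<longleftrightarrow>
     (\<forall>i<r. y 0 i = x0 i) \<and>
     (\<forall>t\<ge>0. \<forall>i<r. ((\<lambda>s. y s i) has_real_derivative vfield r \<alpha> m (y t) i) (at t within {0..}))"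

definition lyap_stable :: "nat \<Rightarrow> (nat \<Rightarrow> real) \<Rightarrow> real \<Rightarrow> (nat \<Rightarrow> real) \<Rightarrow> bool" where
  "lyap_stable r \<alpha> m p \<longleftrightarrow>
     (\<forall>\<epsilon>>0. \<exists>\<delta>>0. \<forall>x0 y. distr r x0 p < \<delta> \<longrightarrow> is_solution r \<alpha> m x0 y \<longrightarrow>
        (\<forall>t\<ge>0. distr r (y t) p < \<epsilon>))"

definition unstable :: "nat \<Rightarrow> (nat \<Rightarrow> real) \<Rightarrow> real \<Rightarrow> (nat \<Rightarrow> real) \<Rightarrow> bool" where
  "unstable r \<alpha> m p \<longleftrightarrow> \<not> lyap_stable r \<alpha> m p"

definition asymp_stable :: "nat \<Rightarrow> (nat \<Rightarrow> real) \<Rightarrow> real \<Rightarrow> (nat \<Rightarrow> real) \<Rightarrow> bool" where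
  "asymp_stable r \<alpha> m p \<longleftrightarrow>
     (\<exists>\<delta>>0. \<forall>\<epsilon>>0. \<exists>T. \<forall>x0 y. distr r x0 p < \<delta> \<longrightarrow> is_solution r \<alpha> m x0 y \<longrightarrow>
        (\<forall>t\<ge>T. distr r (y t) p < \<epsilon>))"

definition V0 :: "nat \<Rightarrow> (nat \<Rightarrow> real) \<Rightarrow> nat \<Rightarrow> real" where
  "V0 r \<alpha> i = (\<Prod>j\<in>{Suc i..<r}. \<alpha> j)"

end

theory Submission
  imports Defs
begin

lemma hillf_nonneg_eq: "x \<ge> 0 \<Longrightarrow> hillf m x = x powr m / (1 + x powr m)"
  by (cases "x = 0") (auto simp: hillf_def)

lemma hillf_odd: "hillf m (-x) = - hillf m x"
  by (simp add: hillf_def sgn_minus)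

lemma hillf_neg_eq: "x \<le> 0 \<Longrightarrow> hillf m x = - ((-x) powr m / (1 + (-x) powr m))"
  using hillf_odd[of m "-x"] hillf_nonneg_eq[of "-x" m] by auto

lemma hillf_bound_pos:
  assumes "x \<ge> 0" "m \<ge> 1" shows "hillf m x \<le> m * x" "hillf m x \<ge> 0"
proof -
  have p: "x powr m \<ge> 0" by simp
  show "hillf m x \<ge> 0" using p assms by (simp add: hillf_nonneg_eq)
  show "hillf m x \<le> m * x"
  proof (cases "x \<le> 1")
    case True
    have "x powr m \<le> x powr 1" using assms True by (intro powr_mono') auto
    hence "x powr m \<le> x" using assms by (simp add: powr_one)
    moreover have "x powr m / (1 + x powr m) \<le> x powr m" using p
      by (simp add: divide_le_eq algebra_simps mult_nonneg_nonneg add_pos_nonneg)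
    moreover have "x \<le> m * x" using assms by (simp add: mult_right_mono[of 1 m x, simplified])
    ultimately show ?thesis using assms by (simp add: hillf_nonneg_eq)
  next
    case False
    have "x powr m / (1 + x powr m) \<le> 1" using p by (simp add: divide_le_eq add_pos_nonneg)
    moreover have "1 \<le> m * x" using False assms
      using mult_mono[of 1 m 1 x] by simp
    ultimately show ?thesis using assms by (simp add: hillf_nonneg_eq)
  qed
qed

lemma powr_diff_bound:
  fixes a b m :: real
  assumes "0 < a" "a \<le> b" "m \<ge> 1"
  shows "b powr m - a powr m \<le> m * b powr (m - 1) * (b - a)"
proof (cases "a = b")
  case False
  hence "a < b" using assms(2) by (simp add: less_le)
  have "\<exists>c>a. c < b \<and> b powr m - a powr m = (b - a) * (m * c powr (m - 1))"
    by (rule MVT2[OF \<open>a < b\<close>]) (use assms in \<open>auto intro: has_real_derivative_powr\<close>)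
  then obtain c where c: "a < c" "c < b" "b powr m - a powr m = (b - a) * (m * c powr (m - 1))"
    by blast
  have "c powr (m - 1) \<le> b powr (m - 1)" using c assms by (intro powr_mono2) auto
  hence "(b - a) * (m * c powr (m - 1)) \<le> (b - a) * (m * b powr (m - 1))"
    using assms c by (intro mult_left_mono) auto
  thus ?thesis using c by (simp add: algebra_simps)
qed simp

lemma hillf_lip_pos:
  assumes "0 \<le> a" "a \<le> b" "m \<ge> 1"
  shows "\<bar>hillf m b - hillf m a\<bar> \<le> m * (b - a)"
proof (cases "a = 0")
  case True
  thus ?thesis using hillf_bound_pos[of b m] assms by (simp add: hillf_def)
next
  case False
  hence a0: "0 < a" using assms by simp
  define A where "A = a powr m" define B where "B = b powr m"
  have A0: "A > 0" "B > 0" using a0 assms by (auto simp: A_def B_def)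
  have AB: "A \<le> B" unfolding A_def B_def using assms a0 by (intro powr_mono2) auto
  have eq: "hillf m b - hillf m a = (B - A) / ((1 + A) * (1 + B))"
    using assms a0 A0 by (simp add: hillf_nonneg_eq A_def[symmetric] B_def[symmetric] field_simps)
  have d: "B - A \<le> m * b powr (m - 1) * (b - a)"
    unfolding A_def B_def using powr_diff_bound[OF a0 assms(2,3)] .
  have bb: "b powr (m - 1) \<le> 1 + B"
  proof (cases "b \<le> 1")
    case True
    have "b powr (m - 1) \<le> 1 powr (m - 1)" using True a0 assms by (intro powr_mono2) auto
    thus ?thesis using A0 by simp
  next
    case False
    have "b powr (m - 1) \<le> b powr m" using False assms by (intro powr_mono) auto
    thus ?thesis by (simp add: B_def)
  qed
  have "(B - A) / ((1 + A) * (1 + B)) \<le> (B - A) / (1 + B)"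
    using A0 AB by (intro divide_left_mono) (auto simp: mult_pos_pos)
  also have "\<dots> \<le> m * b powr (m - 1) * (b - a) / (1 + B)"
    using d A0 by (intro divide_right_mono) auto
  also have "\<dots> \<le> m * (b - a)"
    using bb A0 assms by (simp add: divide_le_eq mult.commute mult.left_commute mult_left_mono)
  finally have "hillf m b - hillf m a \<le> m * (b - a)" using eq by simp
  moreover have "hillf m b - hillf m a \<ge> 0" using eq A0 AB by simp
  ultimately show ?thesis by simp
qed

lemma hillf_lip:
  assumes "m \<ge> 1"
  shows "\<bar>hillf m x - hillf m y\<bar> \<le> m * \<bar>x - y\<bar>"
proof -
  have pos: "\<bar>hillf m b - hillf m a\<bar> \<le> m * \<bar>b - a\<bar>" if "0 \<le> a" "0 \<le> b" for a b
  proof (cases "a \<le> b")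
    case True thus ?thesis using hillf_lip_pos[OF that(1) True assms] by simp
  next
    case False thus ?thesis using hillf_lip_pos[OF that(2) _ assms, of a] by (simp add: abs_minus_commute)
  qed
  have z: "\<bar>hillf m a\<bar> \<le> m * \<bar>a\<bar>" for a
    using pos[of 0 "\<bar>a\<bar>"] hillf_odd[of m "\<bar>a\<bar>"]
    by (cases "a \<ge> 0") (auto simp: hillf_def)
  show ?thesis
  proof (cases "x \<ge> 0")
    case True
    show ?thesis
    proof (cases "y \<ge> 0")
      case True thus ?thesis using pos[of y x] \<open>x \<ge> 0\<close> by simp
    next
      case False
      have "\<bar>hillf m x - hillf m y\<bar> \<le> m * \<bar>x\<bar> + m * \<bar>y\<bar>" using z[of x] z[of y] by linarith
      moreover have "m * \<bar>x\<bar> + m * \<bar>y\<bar> = m * \<bar>x - y\<bar>" using False True by (auto simp: abs_if algebra_simps)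
      ultimately show ?thesis by simp
    qed
  next
    case False
    show ?thesis
    proof (cases "y \<ge> 0")
      case True
      have "\<bar>hillf m x - hillf m y\<bar> \<le> m * \<bar>x\<bar> + m * \<bar>y\<bar>" using z[of x] z[of y] by linarith
      moreover have "m * \<bar>x\<bar> + m * \<bar>y\<bar> = m * \<bar>x - y\<bar>" using False True by (auto simp: abs_if algebra_simps)
      ultimately show ?thesis by simp
    next
      case False
      have "\<bar>hillf m (-x) - hillf m (-y)\<bar> \<le> m * \<bar>-x - -y\<bar>" using pos[of "-y" "-x"] False \<open>\<not> x \<ge> 0\<close> by simp
      thus ?thesis by (simp add: hillf_odd abs_minus_commute)
    qed
  qed
qed

lemma hillf_mono:
  assumes "m \<ge> 1" "x \<le> y" shows "hillf m x \<le> hillf m y"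
proof -
  have pos: "hillf m a \<le> hillf m b" if "0 \<le> a" "a \<le> b" for a b
  proof -
    have "a powr m \<le> b powr m" using that assms by (intro powr_mono2) auto
    moreover have "a powr m \<ge> 0" by simp
    moreover have "b powr m \<ge> 0" by simp
    ultimately have "a powr m / (1 + a powr m) \<le> b powr m / (1 + b powr m)"
      by (simp add: field_simps add_pos_nonneg)
    thus ?thesis using that by (simp add: hillf_nonneg_eq)
  qed
  show ?thesis
  proof (cases "x \<ge> 0")
    case True thus ?thesis using pos assms by simp
  next
    case False
    show ?thesis
    proof (cases "y \<ge> 0")
      case True
      have "hillf m x \<le> 0" using hillf_bound_pos(2)[of "-x" m] assms False by (simp add: hillf_odd)
      thus ?thesis using hillf_bound_pos(2)[of y m] True assms by simp
    next
      case False
      thus ?thesis using pos[of "-y" "-x"] assms by (simp add: hillf_odd)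
    qed
  qed
qed

lemma hillf_deriv_exists:
  assumes "z \<noteq> 0" shows "\<exists>D. (hillf m has_real_derivative D) (at z)"
proof (cases "z > 0")
  case True
  have d: "((\<lambda>x. x powr m / (1 + x powr m)) has_real_derivative
      ((m * z powr (m - 1)) * (1 + z powr m) - z powr m * (m * z powr (m - 1))) / (1 + z powr m)^2) (at z)"
    using True
    by (auto intro!: derivative_eq_intros has_real_derivative_powr simp: power2_eq_square add_nonneg_eq_0_iff)
  show ?thesis
    by (rule exI, rule has_field_derivative_transform_within_open[OF d, where S="{0<..}"]) (use True in \<open>auto simp: hillf_nonneg_eq\<close>)
next
  case False
  hence z: "z < 0" using assms by simp
  have "((\<lambda>x. (-x) powr m / (1 + (-x) powr m)) has_real_derivative
      ((m * (-z) powr (m - 1) * (-1)) * (1 + (-z) powr m) - (-z) powr m * (m * (-z) powr (m - 1) * (-1))) / (1 + (-z) powr m)^2) (at z)"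
    using z
    by (auto intro!: derivative_eq_intros DERIV_fun_powr simp: power2_eq_square add_nonneg_eq_0_iff)
  note d = DERIV_minus[OF this]
  show ?thesis
    by (rule exI, rule has_field_derivative_transform_within_open[OF d, where S="{..<0}"])
       (use z in \<open>auto simp: hillf_neg_eq\<close>)
qed

lemma hillf_cont: "m \<ge> 1 \<Longrightarrow> continuous_on UNIV (hillf m)"
  by (rule lipschitz_on_continuous_on[of m], rule lipschitz_onI)
     (auto simp: dist_real_def intro: hillf_lip)

lemma has_integral_power0:
  fixes t :: real
  assumes "0 \<le> t"
  shows "((\<lambda>s. s ^ k) has_integral t ^ Suc k / real (Suc k)) {0..t}"
proof -
  have d: "((\<lambda>s. s ^ Suc k / real (Suc k)) has_real_derivative x ^ k) (at x within S)" for x :: real and S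
  proof -
    have "((\<lambda>s. s ^ Suc k / real (Suc k)) has_real_derivative real (Suc k) * x ^ (Suc k - Suc 0) / real (Suc k)) (at x)"
      by (intro DERIV_cdivide DERIV_pow)
    thus ?thesis by (simp add: has_field_derivative_at_within del: of_nat_Suc)
  qed
  have "((\<lambda>s. s ^ k) has_integral (t ^ Suc k / real (Suc k) - 0 ^ Suc k / real (Suc k))) {0..t}"
    by (rule fundamental_theorem_of_calculus[OF assms])
       (use d in \<open>auto simp: has_real_derivative_iff_has_vector_derivative[symmetric]\<close>)
  thus ?thesis by simp
qed

context
  fixes r :: nat and \<alpha> :: "nat \<Rightarrow> real" and m :: real and x0 :: "nat \<Rightarrow> real"
  assumes r1: "r \<ge> 1" and m1: "m \<ge> 1"
begin

definition LA :: real where "LA = m + (\<Sum>j<r. \<bar>\<alpha> j\<bar>) + 1"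

lemma LA_pos: "LA > 0"
  using m1 by (auto simp: LA_def intro!: add_nonneg_pos add_pos_nonneg sum_nonneg)

lemma vfield_lip:
  assumes i: "i < r"
  shows "\<bar>vfield r \<alpha> m x i - vfield r \<alpha> m y i\<bar> \<le> LA * (\<Sum>j<r. \<bar>x j - y j\<bar>)"
proof -
  define S where "S = (\<Sum>j<r. \<bar>x j - y j\<bar>)"
  have k: "\<bar>x k - y k\<bar> \<le> S" if "k < r" for k
    unfolding S_def using that by (intro member_le_sum) auto
  have S0: "S \<ge> 0" unfolding S_def by (auto intro: sum_nonneg)
  have a: "\<bar>\<alpha> k\<bar> \<le> (\<Sum>j<r. \<bar>\<alpha> j\<bar>)" if "k < r" for k
    using that by (intro member_le_sum) auto
  have aS: "\<bar>\<alpha> k\<bar> * S \<le> (\<Sum>j<r. \<bar>\<alpha> j\<bar>) * S" if "k < r" for k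
    using a[OF that] S0 by (intro mult_right_mono) auto
  have LAS: "LA * S = m * S + (\<Sum>j<r. \<bar>\<alpha> j\<bar>) * S + S" by (simp add: LA_def algebra_simps)
  show ?thesis
  proof (cases "i = 0")
    case True
    have "vfield r \<alpha> m x i - vfield r \<alpha> m y i = (hillf m (x (r - 1)) - hillf m (y (r - 1))) - \<alpha> 0 * (x 0 - y 0)"
      using True by (simp add: vfield_def algebra_simps)
    hence "\<bar>vfield r \<alpha> m x i - vfield r \<alpha> m y i\<bar> \<le> \<bar>hillf m (x (r - 1)) - hillf m (y (r - 1))\<bar> + \<bar>\<alpha> 0\<bar> * \<bar>x 0 - y 0\<bar>"
      by (simp add: abs_mult[symmetric] abs_triangle_ineq4)
    also have "\<dots> \<le> m * \<bar>x (r - 1) - y (r - 1)\<bar> + \<bar>\<alpha> 0\<bar> * S"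
      using hillf_lip[OF m1] k[of 0] r1 by (intro add_mono mult_left_mono) auto
    also have "\<dots> \<le> m * S + \<bar>\<alpha> 0\<bar> * S"
      using k[of "r - 1"] r1 m1 by (intro add_mono mult_left_mono) auto
    also have "\<dots> \<le> LA * S" using aS[of 0] r1 S0 LAS by simp
    finally show ?thesis by (simp add: S_def)
  next
    case False
    have "vfield r \<alpha> m x i - vfield r \<alpha> m y i = (x (i - 1) - y (i - 1)) - \<alpha> i * (x i - y i)"
      using False by (simp add: vfield_def algebra_simps)
    hence "\<bar>vfield r \<alpha> m x i - vfield r \<alpha> m y i\<bar> \<le> \<bar>x (i - 1) - y (i - 1)\<bar> + \<bar>\<alpha> i\<bar> * \<bar>x i - y i\<bar>"
      by (simp add: abs_mult[symmetric] abs_triangle_ineq4)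
    also have "\<dots> \<le> S + \<bar>\<alpha> i\<bar> * S"
      using k[of "i - 1"] k[of i] i by (intro add_mono mult_left_mono) auto
    also have "\<dots> \<le> LA * S" using aS[OF i] S0 LAS m1 mult_nonneg_nonneg[of m S] by linarith
    finally show ?thesis by (simp add: S_def)
  qed
qed

lemma vfield_cont:
  assumes "\<And>j. j < r \<Longrightarrow> continuous_on T (\<lambda>t. y t j)" "i < r"
  shows "continuous_on T (\<lambda>t. vfield r \<alpha> m (y t) i)"
proof (cases "i = 0")
  case True
  have "continuous_on T (\<lambda>t. hillf m (y t (r - 1)))"
    by (rule continuous_on_compose2[OF hillf_cont[OF m1] assms(1)]) (use r1 in auto)
  thus ?thesis using True assms r1 by (auto simp: vfield_def intro!: continuous_intros)
next
  case False
  thus ?thesis using assms by (auto simp: vfield_def intro!: continuous_intros)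
qed

primrec pic :: "nat \<Rightarrow> real \<Rightarrow> nat \<Rightarrow> real" where
  "pic 0 = (\<lambda>t i. x0 i)"
| "pic (Suc n) = (\<lambda>t i. x0 i + integral {0..t} (\<lambda>s. vfield r \<alpha> m (pic n s) i))"

lemma pic_Suc_eq: "pic (Suc n) t i = x0 i + integral {0..t} (\<lambda>s. vfield r \<alpha> m (pic n s) i)"
  by simp

declare pic.simps(2)[simp del]

lemma pic_cont: "i < r \<Longrightarrow> continuous_on {0..T} (\<lambda>t. pic n t i)"
proof (induction n arbitrary: i T)
  case 0 thus ?case by simp
next
  case (Suc n)
  have c: "continuous_on {0..T} (\<lambda>s. vfield r \<alpha> m (pic n s) i)"
    by (rule vfield_cont[OF Suc.IH Suc.prems])
  show ?case
    using indefinite_integral_continuous_1[OF integrable_continuous_real[OF c]]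
    by (auto simp: pic_Suc_eq intro!: continuous_intros)
qed

lemma pic_int: "i < r \<Longrightarrow> (\<lambda>s. vfield r \<alpha> m (pic n s) i) integrable_on {0..t}"
  by (rule integrable_continuous_real, rule vfield_cont[OF pic_cont])

definition BB :: real where "BB = (\<Sum>i<r. \<bar>vfield r \<alpha> m x0 i\<bar>) + 1"
definition CC :: real where "CC = real r * LA"

lemma BB_pos: "BB > 0" by (auto simp: BB_def intro!: add_nonneg_pos sum_nonneg)
lemma CC_nonneg: "CC \<ge> 0" using LA_pos by (simp add: CC_def)

lemma pic_diff_bound:
  "0 \<le> t \<Longrightarrow> i < r \<Longrightarrow> \<bar>pic (Suc n) t i - pic n t i\<bar> \<le> BB * CC ^ n * t ^ Suc n / fact (Suc n)"
proof (induction n arbitrary: t i)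
  case 0
  have "\<bar>vfield r \<alpha> m x0 i\<bar> \<le> BB"
    unfolding BB_def using 0 by (smt (verit) lessThan_iff member_le_sum abs_ge_zero finite_lessThan)
  hence "t * \<bar>vfield r \<alpha> m x0 i\<bar> \<le> t * BB" using 0 by (intro mult_left_mono) auto
  thus ?case using 0 by (simp add: pic_Suc_eq integral_const_real abs_mult mult.commute[of BB t])
next
  case (Suc n)
  define K where "K = LA * real r * (BB * CC ^ n / fact (Suc n))"
  have K0: "K \<ge> 0" using LA_pos BB_pos CC_nonneg by (auto simp: K_def)
  have eq: "pic (Suc (Suc n)) t i - pic (Suc n) t i =
      integral {0..t} (\<lambda>s. vfield r \<alpha> m (pic (Suc n) s) i - vfield r \<alpha> m (pic n s) i)"
    by (simp only: pic_Suc_eq[of "Suc n" t i] pic_Suc_eq[of n t i] integral_diff[OF pic_int[OF Suc.prems(2)] pic_int[OF Suc.prems(2)]])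
  have bnd: "norm (vfield r \<alpha> m (pic (Suc n) s) i - vfield r \<alpha> m (pic n s) i) \<le> K * s ^ Suc n"
    if "s \<in> {0..t}" for s
  proof -
    have "(\<Sum>j<r. \<bar>pic (Suc n) s j - pic n s j\<bar>) \<le> real (card {..<r}) * (BB * CC ^ n * s ^ Suc n / fact (Suc n))"
      by (rule sum_bounded_above) (use Suc.IH that in auto)
    hence "LA * (\<Sum>j<r. \<bar>pic (Suc n) s j - pic n s j\<bar>) \<le> LA * (real r * (BB * CC ^ n * s ^ Suc n / fact (Suc n)))"
      using LA_pos by (intro mult_left_mono) auto
    also have "\<dots> = K * s ^ Suc n" by (simp add: K_def)
    finally show ?thesis using order_trans[OF vfield_lip[OF Suc.prems(2)]] by (simp only: real_norm_def)
  qed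
  have hi: "((\<lambda>s. K * s ^ Suc n) has_integral K * (t ^ Suc (Suc n) / real (Suc (Suc n)))) {0..t}"
    by (rule has_integral_mult_right[OF has_integral_power0[OF Suc.prems(1)]])
  have "\<bar>pic (Suc (Suc n)) t i - pic (Suc n) t i\<bar> \<le> K * (t ^ Suc (Suc n) / real (Suc (Suc n)))"
    unfolding eq using integral_norm_bound_integral[OF integrable_diff[OF pic_int pic_int] has_integral_integrable[OF hi] bnd]
      Suc.prems integral_unique[OF hi] by simp
  also have "\<dots> = BB * CC ^ Suc n * t ^ Suc (Suc n) / fact (Suc (Suc n))"
    by (simp add: K_def CC_def field_simps)
  finally show ?case .
qed

definition beta :: "real \<Rightarrow> nat \<Rightarrow> real" where
  "beta T n = BB * T * (inverse (fact n) * (CC * T) ^ n)"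

lemma summable_beta: "summable (beta T)"
  unfolding beta_def by (intro summable_mult summable_exp)

lemma beta_bound:
  assumes "0 \<le> t" "t \<le> T"
  shows "BB * CC ^ n * t ^ Suc n / fact (Suc n) \<le> beta T n"
proof -
  have "CC ^ n * t ^ Suc n \<le> CC ^ n * T ^ Suc n"
    using assms CC_nonneg by (intro mult_left_mono power_mono) auto
  moreover have "BB * (CC ^ n * T ^ Suc n) / fact (Suc n) \<le> BB * (CC ^ n * T ^ Suc n) / fact n"
    using assms BB_pos CC_nonneg by (intro divide_left_mono) (auto simp: fact_mono)
  moreover have "BB * (CC ^ n * t ^ Suc n) / fact (Suc n) \<le> BB * (CC ^ n * T ^ Suc n) / fact (Suc n)"
    using mult_left_mono[OF calculation(1), of BB] BB_pos by (intro divide_right_mono) auto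
  ultimately have "BB * CC ^ n * t ^ Suc n / fact (Suc n) \<le> BB * (CC ^ n * T ^ Suc n) / fact n"
    by (simp add: mult.assoc)
  also have "\<dots> = beta T n" by (simp add: beta_def power_mult_distrib field_simps)
  finally show ?thesis .
qed

definition Y :: "real \<Rightarrow> nat \<Rightarrow> real" where
  "Y t i = x0 i + (\<Sum>k. pic (Suc k) t i - pic k t i)"

lemma pic_telescope: "pic n t i = x0 i + (\<Sum>k<n. pic (Suc k) t i - pic k t i)"
  using sum_lessThan_telescope[of "\<lambda>k. pic k t i" n] by simp

lemma pic_Y_bound:
  assumes "0 \<le> t" "t \<le> T" "i < r"
  shows "\<bar>pic n t i - Y t i\<bar> \<le> (\<Sum>k. beta T (k + n))"
proof -
  define d where "d = (\<lambda>k. pic (Suc k) t i - pic k t i)"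
  have db: "\<bar>d k\<bar> \<le> beta T k" for k
    using pic_diff_bound[OF assms(1,3), of k] beta_bound[OF assms(1,2), of k] by (simp add: d_def)
  have sd: "summable (\<lambda>k. \<bar>d k\<bar>)"
    by (rule summable_comparison_test[OF _ summable_beta]) (use db in auto)
  hence sd': "summable d" by (rule summable_rabs_cancel)
  have sds: "summable (\<lambda>k. \<bar>d (k + n)\<bar>)" using sd by (subst summable_iff_shift)
  have sbs: "summable (\<lambda>k. beta T (k + n))" using summable_beta by (subst summable_iff_shift)
  have e1: "suminf d = (\<Sum>k. d (k + n)) + sum d {..<n}"
    by (rule suminf_split_initial_segment[OF sd'])
  have e2: "pic n t i = x0 i + sum d {..<n}" unfolding d_def by (rule pic_telescope)
  have e3: "Y t i = x0 i + suminf d" unfolding d_def Y_def ..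
  have "pic n t i - Y t i = - (\<Sum>k. d (k + n))" using e1 e2 e3 by linarith
  hence "\<bar>pic n t i - Y t i\<bar> = \<bar>\<Sum>k. d (k + n)\<bar>" by simp
  also have "\<dots> \<le> (\<Sum>k. \<bar>d (k + n)\<bar>)" by (rule summable_rabs[OF sds])
  also have "\<dots> \<le> (\<Sum>k. beta T (k + n))" by (rule suminf_le[OF _ sds sbs]) (use db in auto)
  finally show ?thesis .
qed

lemma beta_tail: "(\<lambda>n. \<Sum>k. beta T (k + n)) \<longlonglongrightarrow> 0"
proof -
  have "(\<lambda>n. suminf (beta T) - sum (beta T) {..<n}) \<longlonglongrightarrow> suminf (beta T) - suminf (beta T)"
    by (intro tendsto_diff tendsto_const summable_LIMSEQ summable_beta)
  moreover have "(\<Sum>k. beta T (k + n)) = suminf (beta T) - sum (beta T) {..<n}" for n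
    using suminf_split_initial_segment[OF summable_beta, of T n] by simp
  ultimately show ?thesis by simp
qed

lemma Y_cont: "i < r \<Longrightarrow> continuous_on {0..T} (\<lambda>t. Y t i)"
proof (rule uniform_limit_theorem[where F = sequentially and f = "\<lambda>n t. pic n t i"])
  assume i: "i < r"
  show "\<forall>\<^sub>F n in sequentially. continuous_on {0..T} (\<lambda>t. pic n t i)"
    using pic_cont[OF i] by simp
  show "uniform_limit {0..T} (\<lambda>n t. pic n t i) (\<lambda>t. Y t i) sequentially"
    unfolding uniform_limit_iff
  proof (intro allI impI)
    fix e :: real assume e: "e > 0"
    have "\<forall>\<^sub>F n in sequentially. (\<Sum>k. beta T (k + n)) < e"
      using order_tendstoD(2)[OF beta_tail e] .
    thus "\<forall>\<^sub>F n in sequentially. \<forall>t\<in>{0..T}. dist (pic n t i) (Y t i) < e"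
    proof eventually_elim
      case (elim n)
      show ?case
      proof
        fix t assume "t \<in> {0..T}"
        hence "\<bar>pic n t i - Y t i\<bar> \<le> (\<Sum>k. beta T (k + n))" using pic_Y_bound[OF _ _ i] by auto
        thus "dist (pic n t i) (Y t i) < e" using elim by (simp add: dist_real_def)
      qed
    qed
  qed
qed simp

lemma Y_int_cont: "i < r \<Longrightarrow> continuous_on {0..T} (\<lambda>s. vfield r \<alpha> m (Y s) i)"
  by (rule vfield_cont[OF Y_cont])

lemma Y_integral:
  assumes t: "0 \<le> t" and i: "i < r"
  shows "Y t i = x0 i + integral {0..t} (\<lambda>s. vfield r \<alpha> m (Y s) i)"
proof -
  define I where "I = integral {0..t} (\<lambda>s. vfield r \<alpha> m (Y s) i)"
  have intY: "(\<lambda>s. vfield r \<alpha> m (Y s) i) integrable_on {0..t}"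
    by (rule integrable_continuous_real[OF Y_int_cont[OF i]])
  have l1: "(\<lambda>n. pic (Suc n) t i) \<longlonglongrightarrow> Y t i"
  proof (rule LIM_zero_cancel, rule Lim_null_comparison)
    show "\<forall>\<^sub>F n in sequentially. norm (pic (Suc n) t i - Y t i) \<le> (\<Sum>k. beta t (k + Suc n))"
      using pic_Y_bound[OF t order.refl i] unfolding real_norm_def by (intro always_eventually allI) blast
    show "(\<lambda>n. \<Sum>k. beta t (k + Suc n)) \<longlonglongrightarrow> 0"
      using LIMSEQ_Suc[OF beta_tail] .
  qed
  have ic: "\<And>c. integral {0..t} (\<lambda>s. c) = t * c" using t by simp
  have l2: "(\<lambda>n. pic (Suc n) t i) \<longlonglongrightarrow> x0 i + I"
  proof (rule LIM_zero_cancel, rule Lim_null_comparison)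
    show "\<forall>\<^sub>F n in sequentially. norm (pic (Suc n) t i - (x0 i + I)) \<le> t * (LA * (real r * (\<Sum>k. beta t (k + n))))"
    proof (rule always_eventually, rule allI)
      fix n
      have idf: "integral {0..t} (\<lambda>s. vfield r \<alpha> m (pic n s) i - vfield r \<alpha> m (Y s) i)
          = integral {0..t} (\<lambda>s. vfield r \<alpha> m (pic n s) i) - I"
        unfolding I_def by (rule integral_diff[OF pic_int[OF i] intY])
      have e: "pic (Suc n) t i - (x0 i + I) = integral {0..t} (\<lambda>s. vfield r \<alpha> m (pic n s) i - vfield r \<alpha> m (Y s) i)"
        unfolding idf pic_Suc_eq[of n t i] by simp
      have b: "norm (integral {0..t} (\<lambda>s. vfield r \<alpha> m (pic n s) i - vfield r \<alpha> m (Y s) i)) \<le> integral {0..t} (\<lambda>s. LA * (real r * (\<Sum>k. beta t (k + n))))"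
      proof (rule integral_norm_bound_integral[OF integrable_diff[OF pic_int[OF i] intY]])
        show "(\<lambda>s. LA * (real r * (\<Sum>k. beta t (k + n)))) integrable_on {0..t}" by (rule integrable_const_ivl)
        fix s assume s: "s \<in> {0..t}"
        have "(\<Sum>j<r. \<bar>pic n s j - Y s j\<bar>) \<le> real (card {..<r}) * (\<Sum>k. beta t (k + n))"
          by (rule sum_bounded_above) (use pic_Y_bound s in auto)
        hence "LA * (\<Sum>j<r. \<bar>pic n s j - Y s j\<bar>) \<le> LA * (real r * (\<Sum>k. beta t (k + n)))"
          using LA_pos by (intro mult_left_mono) auto
        thus "norm (vfield r \<alpha> m (pic n s) i - vfield r \<alpha> m (Y s) i) \<le> LA * (real r * (\<Sum>k. beta t (k + n)))"
          using order_trans[OF vfield_lip[OF i]] by (simp only: real_norm_def)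
      qed
      show "norm (pic (Suc n) t i - (x0 i + I)) \<le> t * (LA * (real r * (\<Sum>k. beta t (k + n))))"
        unfolding e using b unfolding ic .
    qed
    show "(\<lambda>n. t * (LA * (real r * (\<Sum>k. beta t (k + n))))) \<longlonglongrightarrow> 0"
      using tendsto_mult[OF tendsto_const[of t] tendsto_mult[OF tendsto_const[of LA] tendsto_mult[OF tendsto_const[of "real r"] beta_tail]]] by simp
  qed
  show ?thesis using LIMSEQ_unique[OF l1 l2] by (simp add: I_def)
qed

lemma Y_deriv:
  assumes t: "0 \<le> t" and i: "i < r"
  shows "((\<lambda>s. Y s i) has_real_derivative vfield r \<alpha> m (Y t) i) (at t within {0..})"
proof -
  have d0: "((\<lambda>u. integral {0..u} (\<lambda>s. vfield r \<alpha> m (Y s) i)) has_vector_derivative vfield r \<alpha> m (Y t) i)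
      (at t within {0..t+1})"
  proof -
    have tmem: "t \<in> {0..t+1}" using t by simp
    show ?thesis using integral_has_vector_derivative[OF Y_int_cont[OF i, of "t+1"] tmem] by simp
  qed
  have d1: "((\<lambda>u. integral {0..u} (\<lambda>s. vfield r \<alpha> m (Y s) i)) has_real_derivative vfield r \<alpha> m (Y t) i)
      (at t within {0..t+1})"
    using d0 unfolding has_real_derivative_iff_has_vector_derivative .
  have d2: "((\<lambda>u. x0 i + integral {0..u} (\<lambda>s. vfield r \<alpha> m (Y s) i)) has_real_derivative vfield r \<alpha> m (Y t) i)
      (at t within {0..t+1})"
    using DERIV_add[OF DERIV_const d1, of "x0 i"] by (simp only: add_0_left)
  have eqY: "x0 i + integral {0..x} (\<lambda>s. vfield r \<alpha> m (Y s) i) = Y x i" if "x \<in> {0..t+1}" for x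
  proof -
    from that have "0 \<le> x" by simp
    from Y_integral[OF this i] show ?thesis by (rule sym)
  qed
  have d: "((\<lambda>s. Y s i) has_real_derivative vfield r \<alpha> m (Y t) i) (at t within {0..t+1})"
    by (rule has_field_derivative_transform_within[OF d2 zero_less_one]) (use t eqY in auto)
  have "at t within {0..} = at t within {0..t+1}"
  proof (rule at_within_nhd[of t "{..<t+1}"])
    show "{0..} \<inter> {..<t + 1} - {t} = {0..t + 1} \<inter> {..<t + 1} - {t}" by auto
  qed auto
  thus ?thesis using d by simp
qed

lemma pic_zero: "pic n 0 i = x0 i"
  by (cases n) (simp_all add: pic_Suc_eq)

lemma Y_zero: "Y 0 i = x0 i"
  unfolding Y_def pic_zero by simp

lemma solution_exists_ctx: "is_solution r \<alpha> m x0 Y"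
  unfolding is_solution_def using Y_zero Y_deriv by auto

end

lemma solution_exists:
  assumes "r \<ge> 1" "m \<ge> 1" shows "\<exists>y. is_solution r \<alpha> m x0 y"
  using solution_exists_ctx[OF assms] by blast

lemma first_violation:
  fixes g :: "'i \<Rightarrow> real \<Rightarrow> real"
  assumes fin: "finite I"
    and cont: "\<And>i. i\<in>I \<Longrightarrow> continuous_on {0..} (g i)"
    and init: "\<And>i. i\<in>I \<Longrightarrow> g i 0 > 0"
    and der: "\<And>t i. t > 0 \<Longrightarrow> i \<in> I \<Longrightarrow> (\<forall>j\<in>I. g j t \<ge> 0) \<Longrightarrow> g i t = 0 \<Longrightarrow>
                \<exists>D>0. (g i has_real_derivative D) (at t within {0..})"
  shows "\<forall>t\<ge>0. \<forall>i\<in>I. g i t > 0"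
proof (rule ccontr)
  assume neg: "\<not> ?thesis"
  define S where "S = {t. t \<ge> 0 \<and> (\<exists>i\<in>I. g i t \<le> 0)}"
  have Sne: "S \<noteq> {}" using neg by (auto simp: S_def not_less)
  have Seq: "S = (\<Union>i\<in>I. {0..} \<inter> g i -` {..0})" by (auto simp: S_def)
  have clS: "closed S" unfolding Seq
    by (rule closed_UN[OF fin]) (use cont in \<open>auto intro!: continuous_closed_preimage\<close>)
  have bdd: "bdd_below S" by (auto simp: S_def bdd_below_def)
  define s where "s = Inf S"
  have sS: "s \<in> S" using closed_contains_Inf[OF Sne bdd clS] s_def by simp
  then obtain i where i: "i\<in>I" "g i s \<le> 0" "s \<ge> 0" by (auto simp: S_def)
  have below: "g j t > 0" if "j\<in>I" "0 \<le> t" "t < s" for j t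
  proof (rule ccontr)
    assume "\<not> g j t > 0" then have "t\<in>S" using that by (auto simp: S_def not_less)
    hence "s \<le> t" unfolding s_def using bdd by (rule cInf_lower)
    with that show False by simp
  qed
  have s0: "s > 0" using init[OF i(1)] i by (cases "s = 0") auto
  have ge: "g j s \<ge> 0" if "j\<in>I" for j
  proof (rule ccontr)
    assume ng: "\<not> ?thesis"
    have "isCont (g j) s" using cont[OF that] s0 by (intro continuous_on_interior[of "{0..}"]) auto
    hence "(g j \<longlongrightarrow> g j s) (at_left s)"
      unfolding isCont_def by (rule tendsto_within_subset) auto
    hence "\<forall>\<^sub>F t in at_left s. g j t < 0" using ng by (intro order_tendstoD(2)) auto
    moreover have "\<forall>\<^sub>F t in at_left s. 0 < t \<and> t < s"
      using s0 by (auto simp: eventually_at_left intro!: exI[of _ 0])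
    ultimately have "\<forall>\<^sub>F t in at_left s. g j t < 0 \<and> 0 < t \<and> t < s" by eventually_elim auto
    then obtain t where "g j t < 0" "0 < t" "t < s"
      using eventually_happens trivial_limit_at_left_real by blast
    with below[OF that, of t] show False by simp
  qed
  have gi0: "g i s = 0" using ge[OF i(1)] i by simp
  obtain D where D: "D > 0" "(g i has_real_derivative D) (at s within {0..})"
    using der[OF s0 i(1) _ gi0] ge by blast
  have "at s within {0..} = at s" using s0 by (intro at_within_interior) auto
  with D have "(g i has_real_derivative D) (at s)" by simp
  from DERIV_pos_inc_left[OF this D(1)] obtain d where d: "d > 0" "\<forall>h>0. h < d \<longrightarrow> g i (s - h) < g i s"
    by blast
  define h where "h = min d s / 2"
  have "g i (s - h) < 0" using d gi0 s0 by (auto simp: h_def)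
  moreover have "g i (s - h) > 0" using below[OF i(1)] d s0 by (auto simp: h_def)
  ultimately show False by simp
qed

lemma distr_ge: "j < r \<Longrightarrow> \<bar>x j - y j\<bar> \<le> distr r x y"
proof -
  assume j: "j < r"
  have "(x j - y j)\<^sup>2 \<le> (\<Sum>i<r. (x i - y i)\<^sup>2)" using j by (intro member_le_sum) auto
  hence "sqrt ((x j - y j)\<^sup>2) \<le> distr r x y" unfolding distr_def by (rule real_sqrt_le_mono)
  thus ?thesis by simp
qed

lemma distr_le_sum: "distr r x y \<le> (\<Sum>i<r. \<bar>x i - y i\<bar>)"
  using L2_set_le_sum_abs[of "\<lambda>i. x i - y i" "{..<r}"] by (simp add: distr_def L2_set_def)

lemma V0_last: "r \<ge> 1 \<Longrightarrow> V0 r \<alpha> (r - 1) = 1"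
  by (simp add: V0_def)

lemma V0_step: "1 \<le> i \<Longrightarrow> i < r \<Longrightarrow> V0 r \<alpha> (i - 1) = \<alpha> i * V0 r \<alpha> i"
  by (simp add: V0_def prod.atLeast_Suc_lessThan)

lemma V0_zero: "r \<ge> 1 \<Longrightarrow> \<alpha> 0 * V0 r \<alpha> 0 = (\<Prod>i<r. \<alpha> i)"
  by (simp add: V0_def prod.atLeast_Suc_lessThan[symmetric] atLeast0LessThan)

lemma prod_shift_le:
  fixes c :: real
  assumes "1 \<le> i" "i < r"
  shows "(\<Prod>j\<in>{Suc (i - 1)..<r}. f j) = f i * (\<Prod>j\<in>{Suc i..<r}. f j)"
  using assms by (simp add: prod.atLeast_Suc_lessThan)

lemma deriv_bound:
  assumes "(f has_real_derivative D) (at z)" "\<eta> > 0"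
  shows "\<exists>\<rho>>0. \<forall>u. \<bar>u\<bar> < \<rho> \<longrightarrow> \<bar>f (z + u) - f z - D * u\<bar> \<le> \<eta> * \<bar>u\<bar>"
proof -
  have "((\<lambda>y. (f y - f z) / (y - z)) \<longlongrightarrow> D) (at z)"
    using assms(1) by (simp add: has_field_derivative_iff)
  then obtain s where s: "s > 0" "\<forall>x. x \<noteq> z \<and> dist x z < s \<longrightarrow> dist ((f x - f z) / (x - z)) D < \<eta>"
    using assms(2) unfolding tendsto_iff eventually_at by blast
  have "\<bar>f (z + u) - f z - D * u\<bar> \<le> \<eta> * \<bar>u\<bar>" if u: "\<bar>u\<bar> < s" for u
  proof (cases "u = 0")
    case False
    have "\<bar>(f (z + u) - f z) / u - D\<bar> < \<eta>"
      using s(2)[rule_format, of "z + u"] u False by (simp add: dist_real_def)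
    hence "\<bar>u\<bar> * \<bar>(f (z + u) - f z) / u - D\<bar> \<le> \<bar>u\<bar> * \<eta>" by (intro mult_left_mono) auto
    moreover have "u * ((f (z + u) - f z) / u - D) = f (z + u) - f z - D * u"
      using False by (simp add: field_simps)
    hence "\<bar>u\<bar> * \<bar>(f (z + u) - f z) / u - D\<bar> = \<bar>f (z + u) - f z - D * u\<bar>"
      by (metis abs_mult)
    ultimately show ?thesis by (simp add: mult.commute)
  qed simp
  thus ?thesis using s(1) by blast
qed

lemma hillf_deriv_nonneg:
  assumes "m \<ge> 1" "(hillf m has_real_derivative D) (at z)" shows "D \<ge> 0"
proof -
  have "((\<lambda>y. (hillf m y - hillf m z) / (y - z)) \<longlongrightarrow> D) (at z)"
    using assms(2) by (simp add: has_field_derivative_iff)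
  moreover have "\<forall>\<^sub>F y in at z. 0 \<le> (hillf m y - hillf m z) / (y - z)"
  proof (rule always_eventually, rule allI)
    fix y
    show "0 \<le> (hillf m y - hillf m z) / (y - z)"
    proof (cases "y \<le> z")
      case True thus ?thesis using hillf_mono[OF assms(1) True] by (simp add: divide_nonpos_nonpos)
    next
      case False thus ?thesis using hillf_mono[OF assms(1), of z y] by simp
    qed
  qed
  ultimately show ?thesis by (rule tendsto_lowerbound) simp
qed

lemma hfun_deriv:
  assumes "z \<noteq> 0" "(hillf m has_real_derivative D) (at z)"
  shows "deriv (hfun m) z = (D * z - hillf m z) / (z * z)"
proof -
  have e: "hfun m = (\<lambda>w. hillf m w / w)" by (rule ext) (simp add: hfun_def)
  have "((\<lambda>w. hillf m w / w) has_real_derivative (D * z - hillf m z * 1) / (z * z)) (at z)"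
    by (rule DERIV_divide[OF assms(2) DERIV_ident assms(1)])
  thus ?thesis unfolding e by (simp add: DERIV_imp_deriv)
qed

lemma small_c:
  fixes \<alpha> :: "nat \<Rightarrow> real" and L :: real and \<sigma> :: real
  assumes "\<forall>j<r. \<alpha> j > 0"
    and lim: "\<sigma> * ((\<Prod>j<r. \<alpha> j) - L) < 0"
  shows "\<exists>c>0. (\<forall>j<r. \<alpha> j + \<sigma> * c > 0) \<and> \<sigma> * ((\<Prod>j<r. \<alpha> j + \<sigma> * c) - L) < 0"
proof -
  have t: "((\<lambda>c. \<sigma> * ((\<Prod>j<r. \<alpha> j + \<sigma> * c) - L)) \<longlongrightarrow> \<sigma> * ((\<Prod>j<r. \<alpha> j + \<sigma> * 0) - L)) (at_right 0)"
    by (intro tendsto_intros tendsto_prod)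
  have e1: "\<forall>\<^sub>F c in at_right 0. \<sigma> * ((\<Prod>j<r. \<alpha> j + \<sigma> * c) - L) < 0"
    using order_tendstoD(2)[OF t] lim by simp
  have e2: "\<forall>\<^sub>F c in at_right 0. \<forall>j\<in>{..<r}. \<alpha> j + \<sigma> * c > 0"
  proof (rule eventually_ball_finite, simp, intro ballI)
    fix j assume "j \<in> {..<r}"
    have "((\<lambda>c. \<alpha> j + \<sigma> * c) \<longlongrightarrow> \<alpha> j + \<sigma> * 0) (at_right 0)" by (intro tendsto_intros)
    thus "\<forall>\<^sub>F c in at_right 0. \<alpha> j + \<sigma> * c > 0"
      using order_tendstoD(1) assms(1) \<open>j \<in> {..<r}\<close> by fastforce
  qed
  have e3: "\<forall>\<^sub>F c in at_right (0::real). c > 0" by (simp add: eventually_at_right_less)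
  have "\<forall>\<^sub>F c in at_right 0. c > 0 \<and> (\<forall>j\<in>{..<r}. \<alpha> j + \<sigma> * c > 0) \<and> \<sigma> * ((\<Prod>j<r. \<alpha> j + \<sigma> * c) - L) < 0"
    using e1 e2 e3 by eventually_elim auto
  then obtain c where "c > 0 \<and> (\<forall>j\<in>{..<r}. \<alpha> j + \<sigma> * c > 0) \<and> \<sigma> * ((\<Prod>j<r. \<alpha> j + \<sigma> * c) - L) < 0"
    using eventually_happens trivial_limit_at_right_real by blast
  thus ?thesis by auto
qed

definition sgb :: "bool \<Rightarrow> real" where "sgb b = (if b then 1 else -1)"

lemma sgb_le: "sgb b * x \<le> \<bar>x\<bar>" by (auto simp: sgb_def)
lemma sgb_sq: "sgb b * sgb b = 1" by (auto simp: sgb_def)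

lemma eq_facts:
  assumes r2: "r \<ge> 2" and eq: "hillf m z = (\<Prod>i<r. \<alpha> i) * z"
    and p_def: "p = (\<lambda>i. z * V0 r \<alpha> i)"
  shows "\<And>i. 1 \<le> i \<Longrightarrow> i < r \<Longrightarrow> vfield r \<alpha> m x i = (x (i - 1) - p (i - 1)) - \<alpha> i * (x i - p i)"
    and "vfield r \<alpha> m x 0 = (hillf m (z + (x (r - 1) - p (r - 1))) - hillf m z) - \<alpha> 0 * (x 0 - p 0)"
    and "p (r - 1) = z"
proof -
  show pl: "p (r - 1) = z" using V0_last[of r \<alpha>] r2 by (simp add: p_def)
  fix i assume i: "1 \<le> i" "i < r"
  have "p (i - 1) = \<alpha> i * p i" using V0_step[OF i, of \<alpha>] by (simp add: p_def)
  thus "vfield r \<alpha> m x i = (x (i - 1) - p (i - 1)) - \<alpha> i * (x i - p i)"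
    using i by (simp add: vfield_def algebra_simps)
next
  have "\<alpha> 0 * p 0 = hillf m z" using V0_zero[of r \<alpha>] r2 eq by (simp add: p_def algebra_simps)
  moreover have "p (r - 1) = z" using V0_last[of r \<alpha>] r2 by (simp add: p_def)
  ultimately show "vfield r \<alpha> m x 0 = (hillf m (z + (x (r - 1) - p (r - 1))) - hillf m z) - \<alpha> 0 * (x 0 - p 0)"
    by (simp add: vfield_def algebra_simps)
qed

lemma sol_deriv:
  assumes "is_solution r \<alpha> m x0 y" "0 \<le> t" "i < r"
  shows "((\<lambda>s. y s i) has_real_derivative vfield r \<alpha> m (y t) i) (at t within {0..})"
  using assms by (auto simp: is_solution_def)

lemma sol_cont:
  assumes "is_solution r \<alpha> m x0 y" "i < r"
  shows "continuous_on {0..} (\<lambda>s. y s i)"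
  by (rule DERIV_continuous_on[OF sol_deriv[OF assms(1) _ assms(2)]]) auto

lemma stable_case:
  fixes r :: nat and \<alpha> :: "nat \<Rightarrow> real" and m z D :: real
  assumes r2: "r \<ge> 2" and apos: "\<forall>i<r. \<alpha> i > 0" and m1: "m \<ge> 1"
    and eq: "hillf m z = (\<Prod>i<r. \<alpha> i) * z"
    and dD: "(hillf m has_real_derivative D) (at z)" and Dlt: "D < (\<Prod>i<r. \<alpha> i)"
  shows "asymp_stable r \<alpha> m (\<lambda>i. z * V0 r \<alpha> i)"
proof -
  define p where "p = (\<lambda>i. z * V0 r \<alpha> i)"
  note ef = eq_facts[OF r2 eq p_def]
  have D0: "D \<ge> 0" by (rule hillf_deriv_nonneg[OF m1 dD])
  define \<eta> where "\<eta> = ((\<Prod>i<r. \<alpha> i) - D) / 2"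
  have \<eta>0: "\<eta> > 0" using Dlt by (simp add: \<eta>_def)
  obtain \<rho> where \<rho>: "\<rho> > 0" "\<forall>u. \<bar>u\<bar> < \<rho> \<longrightarrow> \<bar>hillf m (z + u) - hillf m z - D * u\<bar> \<le> \<eta> * \<bar>u\<bar>"
    using deriv_bound[OF dD \<eta>0] by blast
  have "(-1) * ((\<Prod>j<r. \<alpha> j) - (D + \<eta>)) < 0" using Dlt unfolding \<eta>_def by (simp add: field_simps)
  from small_c[OF apos this] obtain c2 where c2: "c2 > 0" "\<forall>j<r. \<alpha> j + (-1) * c2 > 0"
    "(-1) * ((\<Prod>j<r. \<alpha> j + (-1) * c2) - (D + \<eta>)) < 0" by blast
  define c where "c = c2 / 2"
  have c0: "c > 0" using c2 by (simp add: c_def)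
  have ac: "\<alpha> j - 2 * c > 0" if "j < r" for j using c2(2) that by (simp add: c_def)
  have prodc: "(\<Prod>j<r. \<alpha> j - 2 * c) > D + \<eta>" using c2(3) by (simp add: c_def)
  define v where "v i = (\<Prod>j\<in>{Suc i..<r}. \<alpha> j - 2 * c)" for i
  have vpos: "v i > 0" for i unfolding v_def by (rule prod_pos) (use ac in auto)
  have vlast: "v (r - 1) = 1" using r2 by (simp add: v_def)
  have vstep: "v (i - 1) = (\<alpha> i - 2 * c) * v i" if "1 \<le> i" "i < r" for i
    using that by (simp add: v_def prod.atLeast_Suc_lessThan)
  have v0: "(\<alpha> 0 - 2 * c) * v 0 = (\<Prod>j<r. \<alpha> j - 2 * c)"
    using r2 prod.atLeast_Suc_lessThan[of 0 r "\<lambda>j. \<alpha> j - 2 * c"] by (simp add: v_def atLeast0LessThan)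
  have cond0: "D + \<eta> < (\<alpha> 0 - c) * v 0"
  proof -
    have "(\<alpha> 0 - 2 * c) * v 0 \<le> (\<alpha> 0 - c) * v 0" using vpos[of 0] c0 by (intro mult_right_mono) auto
    thus ?thesis using prodc v0 by linarith
  qed
  define K where "K = \<rho> / 2"
  have K0: "K > 0" and Kr: "K < \<rho>" using \<rho> by (auto simp: K_def)
  have rne: "{..<r} \<noteq> {}" using r2 by (metis empty_iff lessThan_iff not_numeral_le_zero zero_less_iff_neq_zero le_zero_eq)
  define vmin where "vmin = Min (v ` {..<r})"
  have vmin0: "vmin > 0" unfolding vmin_def using rne vpos by (subst Min_gr_iff) auto
  have vmin_le: "vmin \<le> v i" if "i < r" for i using that by (auto simp: vmin_def)
  define Sv where "Sv = (\<Sum>i<r. v i)"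
  have Sv0: "Sv > 0" unfolding Sv_def using rne vpos by (intro sum_pos) auto
  define \<delta> where "\<delta> = K * vmin"
  have \<delta>0: "\<delta> > 0" using K0 vmin0 by (simp add: \<delta>_def)
  have main: "\<forall>t\<ge>0. \<forall>i<r. \<bar>y t i - p i\<bar> < K * v i * exp (- c * t)"
    if dx: "distr r x0 p < \<delta>" and sol: "is_solution r \<alpha> m x0 y" for x0 y
  proof -
    define g where "g ib s = K - sgb (snd ib) * exp (c * s) * (y s (fst ib) - p (fst ib)) / v (fst ib)"
      for ib :: "nat \<times> bool" and s
    define I where "I = {..<r} \<times> (UNIV :: bool set)"
    have dg: "(g ib has_real_derivative
        - sgb (snd ib) * (c * exp (c * t) * (y t (fst ib) - p (fst ib)) + exp (c * t) * vfield r \<alpha> m (y t) (fst ib)) / v (fst ib))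
        (at t within {0..})" if "ib \<in> I" "0 \<le> t" for ib t
    proof -
      have dy: "((\<lambda>s. y s (fst ib)) has_real_derivative vfield r \<alpha> m (y t) (fst ib)) (at t within {0..})"
        using sol_deriv[OF sol that(2)] that(1) by (auto simp: I_def)
      have vne: "v (fst ib) \<noteq> 0" using vpos[of "fst ib"] by simp
      show ?thesis unfolding g_def
        by (auto intro!: derivative_eq_intros dy simp: field_simps vne power2_eq_square)
    qed
    have allpos: "\<forall>t\<ge>0. \<forall>ib\<in>I. g ib t > 0"
    proof (rule first_violation)
      show "finite I" by (simp add: I_def)
      fix ib assume ib: "ib \<in> I"
      show "continuous_on {0..} (g ib)" by (rule DERIV_continuous_on[OF dg[OF ib]]) auto
      have i: "fst ib < r" using ib by (auto simp: I_def)
      have "\<bar>x0 (fst ib) - p (fst ib)\<bar> < K * v (fst ib)"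
        using distr_ge[OF i, of x0 p] dx vmin_le[OF i] K0 unfolding \<delta>_def
        by (meson le_less_trans mult_left_mono less_imp_le order.strict_trans2)
      hence "sgb (snd ib) * (x0 (fst ib) - p (fst ib)) < K * v (fst ib)"
        using sgb_le[of "snd ib" "x0 (fst ib) - p (fst ib)"] by linarith
      moreover have "y 0 (fst ib) = x0 (fst ib)" using sol i by (simp add: is_solution_def)
      ultimately show "g ib 0 > 0" using vpos[of "fst ib"] by (simp add: g_def field_simps)
    next
      fix t ib assume t: "t > 0" and ib: "ib \<in> I" and allg: "\<forall>j\<in>I. g j t \<ge> 0" and gz: "g ib t = 0"
      define i where "i = fst ib"
      define sg where "sg = sgb (snd ib)"
      define E where "E = exp (c * t)"
      have E0: "E > 0" by (simp add: E_def)
      have E1: "E \<ge> 1" using c0 t by (simp add: E_def)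
      define w where "w j = E * (y t j - p j)" for j
      have i: "i < r" using ib by (auto simp: I_def i_def)
      have wb: "\<bar>w j\<bar> \<le> K * v j" if "j < r" for j
      proof -
        have "g (j, True) t \<ge> 0" "g (j, False) t \<ge> 0" using allg that by (auto simp: I_def)
        hence "E * (y t j - p j) / v j \<le> K" "- (E * (y t j - p j)) / v j \<le> K"
          by (auto simp: g_def sgb_def E_def)
        hence "E * (y t j - p j) \<le> K * v j" "- (E * (y t j - p j)) \<le> K * v j"
          using vpos[of j] by (auto simp: field_simps)
        thus ?thesis by (simp add: w_def)
      qed
      have wi: "sg * w i = K * v i"
      proof -
        have "sg * (E * (y t i - p i)) / v i = K" using gz by (simp add: g_def sg_def E_def i_def)
        thus ?thesis using vpos[of i] by (simp add: w_def field_simps)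
      qed
      have key: "sg * (c * w i + E * vfield r \<alpha> m (y t) i) < 0"
      proof (cases "i = 0")
        case False
        hence i1: "1 \<le> i" by simp
        have EF0: "vfield r \<alpha> m (y t) i = (y t (i - 1) - p (i - 1)) - \<alpha> i * (y t i - p i)"
          by (rule ef(1)[OF i1 i])
        have EF: "E * vfield r \<alpha> m (y t) i = w (i - 1) - \<alpha> i * w i"
          unfolding EF0 w_def by (simp add: algebra_simps)
        have "sg * (c * w i + E * vfield r \<alpha> m (y t) i) = c * (sg * w i) + sg * w (i - 1) - \<alpha> i * (sg * w i)"
          unfolding EF by (simp add: algebra_simps)
        also have "\<dots> = c * (K * v i) + sg * w (i - 1) - \<alpha> i * (K * v i)" unfolding wi ..
        also have "sg * w (i - 1) \<le> K * v (i - 1)"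
          using order_trans[OF sgb_le[of "snd ib" "w (i - 1)"] wb[of "i - 1"]] i by (simp add: sg_def)
        hence "c * (K * v i) + sg * w (i - 1) - \<alpha> i * (K * v i) \<le> c * (K * v i) + K * v (i - 1) - \<alpha> i * (K * v i)"
          by linarith
        also have "\<dots> = - c * (K * v i)" unfolding vstep[OF i1 i] by (simp add: algebra_simps)
        also have "\<dots> < 0" using c0 K0 vpos[of i] by simp
        finally show ?thesis .
      next
        case True
        define e where "e = y t (r - 1) - p (r - 1)"
        define H where "H = hillf m (z + e) - hillf m z"
        have EF0: "vfield r \<alpha> m (y t) 0 = (hillf m (z + (y t (r - 1) - p (r - 1))) - hillf m z) - \<alpha> 0 * (y t 0 - p 0)"
          by (rule ef(2))
        have EF: "E * vfield r \<alpha> m (y t) i = E * H - \<alpha> 0 * w 0"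
          unfolding True EF0 w_def H_def e_def by (simp add: algebra_simps)
        have we: "\<bar>E * e\<bar> \<le> K" using wb[of "r - 1"] r2 vlast by (simp add: w_def e_def)
        have "\<bar>e\<bar> \<le> \<bar>E * e\<bar>" using E1 by (simp add: abs_mult mult_le_cancel_right1)
        hence e\<rho>: "\<bar>e\<bar> < \<rho>" using we Kr by linarith
        have "\<bar>H - D * e\<bar> \<le> \<eta> * \<bar>e\<bar>" using \<rho>(2) e\<rho> by (simp add: H_def)
        moreover have "\<bar>H\<bar> \<le> \<bar>H - D * e\<bar> + \<bar>D * e\<bar>" using abs_triangle_ineq[of "H - D * e" "D * e"] by simp
        moreover have "\<bar>D * e\<bar> = D * \<bar>e\<bar>" using D0 by (simp add: abs_mult)
        ultimately have "\<bar>H\<bar> \<le> (D + \<eta>) * \<bar>e\<bar>" by (simp add: distrib_right)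
        hence "E * \<bar>H\<bar> \<le> (D + \<eta>) * \<bar>E * e\<bar>" using E0 by (simp add: abs_mult mult.left_commute mult_left_mono)
        also have "\<dots> \<le> (D + \<eta>) * K" using we D0 \<eta>0 by (intro mult_left_mono) auto
        finally have EHa: "E * \<bar>H\<bar> \<le> (D + \<eta>) * K" .
        have "sg * (E * H) = E * (sg * H)" by simp
        also have "\<dots> \<le> E * \<bar>H\<bar>" using sgb_le[of "snd ib" H] E0 by (intro mult_left_mono) (auto simp: sg_def)
        finally have EH: "sg * (E * H) \<le> (D + \<eta>) * K" using EHa by linarith
        have "sg * (c * w i + E * vfield r \<alpha> m (y t) i) = c * (sg * w 0) + sg * (E * H) - \<alpha> 0 * (sg * w 0)"
          unfolding EF using True by (simp add: algebra_simps)
        also have "\<dots> = c * (K * v 0) + sg * (E * H) - \<alpha> 0 * (K * v 0)" using wi True by simp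
        also have "\<dots> \<le> c * (K * v 0) + (D + \<eta>) * K - \<alpha> 0 * (K * v 0)" using EH by linarith
        also have "\<dots> = K * ((D + \<eta>) - (\<alpha> 0 - c) * v 0)" by (simp add: algebra_simps)
        also have "\<dots> < 0" using cond0 K0 by (simp add: mult_pos_neg)
        finally show ?thesis .
      qed
      have "- sgb (snd ib) * (c * exp (c * t) * (y t (fst ib) - p (fst ib)) + exp (c * t) * vfield r \<alpha> m (y t) (fst ib)) / v (fst ib)
           = - (sg * (c * w i + E * vfield r \<alpha> m (y t) i)) / v i"
        by (simp add: sg_def E_def w_def i_def algebra_simps)
      also have "\<dots> > 0" using key vpos[of i] by (simp add: divide_neg_pos)
      finally show "\<exists>D>0. (g ib has_real_derivative D) (at t within {0..})"
        using dg[OF ib] t by (intro exI[of _ "- sgb (snd ib) * (c * exp (c * t) * (y t (fst ib) - p (fst ib)) + exp (c * t) * vfield r \<alpha> m (y t) (fst ib)) / v (fst ib)"]) auto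
    qed
    show ?thesis
    proof (intro allI impI)
      fix t :: real and i :: nat assume t: "0 \<le> t" and i: "i < r"
      have "g (i, True) t > 0" "g (i, False) t > 0" using allpos t i by (auto simp: I_def)
      hence "exp (c * t) * (y t i - p i) / v i < K" "- (exp (c * t) * (y t i - p i)) / v i < K"
        by (auto simp: g_def sgb_def)
      hence "exp (c * t) * (y t i - p i) < K * v i" "- (exp (c * t) * (y t i - p i)) < K * v i"
        using vpos[of i] by (auto simp: field_simps)
      hence "exp (c * t) * \<bar>y t i - p i\<bar> < K * v i" by (simp add: abs_if algebra_simps)
      hence "exp (- c * t) * (exp (c * t) * \<bar>y t i - p i\<bar>) < exp (- c * t) * (K * v i)"
        by (intro mult_strict_left_mono) auto
      thus "\<bar>y t i - p i\<bar> < K * v i * exp (- c * t)"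
        by (simp add: exp_minus field_simps)
    qed
  qed
  show ?thesis
    unfolding asymp_stable_def p_def[symmetric]
  proof (rule exI[of _ \<delta>], intro conjI allI impI \<delta>0)
    fix \<epsilon> :: real assume \<epsilon>: "\<epsilon> > 0"
    define T' where "T' = (ln (K * Sv / \<epsilon>) + 1) / c"
    define T where "T = max 0 T'"
    have eT: "exp (- c * T') < \<epsilon> / (K * Sv)"
    proof -
      have "- c * T' = - ln (K * Sv / \<epsilon>) - 1" using c0 by (simp add: T'_def field_simps)
      hence "exp (- c * T') = exp (- ln (K * Sv / \<epsilon>)) * exp (- 1)" by (simp add: exp_diff exp_minus divide_inverse)
      also have "\<dots> = \<epsilon> / (K * Sv) * exp (-1)" using K0 Sv0 \<epsilon> by (simp add: exp_minus)
      also have "\<dots> < \<epsilon> / (K * Sv) * 1" using K0 Sv0 \<epsilon> by (intro mult_strict_left_mono) auto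
      finally show ?thesis by simp
    qed
    show "\<exists>T. \<forall>x0 y. distr r x0 p < \<delta> \<longrightarrow> is_solution r \<alpha> m x0 y \<longrightarrow> (\<forall>t\<ge>T. distr r (y t) p < \<epsilon>)"
    proof (intro exI[of _ T] allI impI)
      fix x0 y t assume dx: "distr r x0 p < \<delta>" and sol: "is_solution r \<alpha> m x0 y" and tT: "T \<le> t"
      have t0: "0 \<le> t" using tT by (simp add: T_def)
      have tT': "T' \<le> t" using tT by (simp add: T_def)
      have "distr r (y t) p \<le> (\<Sum>i<r. \<bar>y t i - p i\<bar>)" by (rule distr_le_sum)
      also have "\<dots> \<le> (\<Sum>i<r. K * v i * exp (- c * t))"
        using main[OF dx sol] t0 by (intro sum_mono) (auto intro: less_imp_le)
      also have "\<dots> = K * Sv * exp (- c * t)" by (simp add: Sv_def sum_distrib_left sum_distrib_right)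
      also have "\<dots> \<le> K * Sv * exp (- c * T')" using tT' c0 K0 Sv0 by (intro mult_left_mono) auto
      also have "\<dots> < K * Sv * (\<epsilon> / (K * Sv))" using eT K0 Sv0 by (intro mult_strict_left_mono) auto
      also have "\<dots> = \<epsilon>" using K0 Sv0 by simp
      finally show "distr r (y t) p < \<epsilon>" .
    qed
  qed
qed

lemma unstable_case:
  fixes r :: nat and \<alpha> :: "nat \<Rightarrow> real" and m z D :: real
  assumes r2: "r \<ge> 2" and apos: "\<forall>i<r. \<alpha> i > 0" and m1: "m \<ge> 1"
    and eq: "hillf m z = (\<Prod>i<r. \<alpha> i) * z"
    and dD: "(hillf m has_real_derivative D) (at z)" and Dgt: "D > (\<Prod>i<r. \<alpha> i)"
  shows "unstable r \<alpha> m (\<lambda>i. z * V0 r \<alpha> i)"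
proof -
  define p where "p = (\<lambda>i. z * V0 r \<alpha> i)"
  note ef = eq_facts[OF r2 eq p_def]
  define \<eta> where "\<eta> = (D - (\<Prod>i<r. \<alpha> i)) / 2"
  have \<eta>0: "\<eta> > 0" using Dgt by (simp add: \<eta>_def)
  have Dh: "D - \<eta> > 0"
  proof -
    have "(\<Prod>i<r. \<alpha> i) > 0" using apos by (intro prod_pos) auto
    thus ?thesis using Dgt unfolding \<eta>_def by (simp add: field_simps)
  qed
  obtain \<rho> where \<rho>: "\<rho> > 0" "\<forall>u. \<bar>u\<bar> < \<rho> \<longrightarrow> \<bar>hillf m (z + u) - hillf m z - D * u\<bar> \<le> \<eta> * \<bar>u\<bar>"
    using deriv_bound[OF dD \<eta>0] by blast
  have "1 * ((\<Prod>j<r. \<alpha> j) - (D - \<eta>)) < 0" using Dgt unfolding \<eta>_def by (simp add: field_simps)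
  from small_c[OF apos this] obtain c2 where c2: "c2 > 0" "\<forall>j<r. \<alpha> j + 1 * c2 > 0"
    "1 * ((\<Prod>j<r. \<alpha> j + 1 * c2) - (D - \<eta>)) < 0" by blast
  define c where "c = c2 / 2"
  have c0: "c > 0" using c2 by (simp add: c_def)
  have ac: "\<alpha> j + 2 * c > 0" if "j < r" for j using c2(2) that by (simp add: c_def)
  have prodc: "(\<Prod>j<r. \<alpha> j + 2 * c) < D - \<eta>" using c2(3) by (simp add: c_def)
  define v where "v i = (\<Prod>j\<in>{Suc i..<r}. \<alpha> j + 2 * c)" for i
  have vpos: "v i > 0" for i unfolding v_def by (rule prod_pos) (use ac in auto)
  have vlast: "v (r - 1) = 1" using r2 by (simp add: v_def)
  have vstep: "v (i - 1) = (\<alpha> i + 2 * c) * v i" if "1 \<le> i" "i < r" for i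
    using that by (simp add: v_def prod.atLeast_Suc_lessThan)
  have v0: "(\<alpha> 0 + 2 * c) * v 0 = (\<Prod>j<r. \<alpha> j + 2 * c)"
    using r2 prod.atLeast_Suc_lessThan[of 0 r "\<lambda>j. \<alpha> j + 2 * c"] by (simp add: v_def atLeast0LessThan)
  have cond0: "(\<alpha> 0 + c) * v 0 < D - \<eta>"
  proof -
    have "(\<alpha> 0 + c) * v 0 \<le> (\<alpha> 0 + 2 * c) * v 0" using vpos[of 0] c0 by (intro mult_right_mono) auto
    thus ?thesis using prodc v0 by linarith
  qed
  have rne: "{..<r} \<noteq> {}" using r2 by (metis empty_iff lessThan_iff not_numeral_le_zero zero_less_iff_neq_zero le_zero_eq)
  define Sv where "Sv = (\<Sum>i<r. v i)"
  have Sv0: "Sv > 0" unfolding Sv_def using rne vpos by (intro sum_pos) auto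
  show ?thesis
    unfolding unstable_def lyap_stable_def p_def[symmetric]
  proof
    assume stab: "\<forall>\<epsilon>>0. \<exists>\<delta>>0. \<forall>x0 y. distr r x0 p < \<delta> \<longrightarrow> is_solution r \<alpha> m x0 y \<longrightarrow> (\<forall>t\<ge>0. distr r (y t) p < \<epsilon>)"
    obtain \<delta> where \<delta>: "\<delta> > 0" "\<forall>x0 y. distr r x0 p < \<delta> \<longrightarrow> is_solution r \<alpha> m x0 y \<longrightarrow> (\<forall>t\<ge>0. distr r (y t) p < \<rho>)"
      using stab \<rho>(1) by blast
    define s where "s = \<delta> / (Sv + 1)"
    have s0: "s > 0" using \<delta> Sv0 by (simp add: s_def)
    define x0 where "x0 i = p i + s * v i" for i
    have "distr r x0 p \<le> (\<Sum>i<r. \<bar>x0 i - p i\<bar>)" by (rule distr_le_sum)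
    also have "\<dots> = s * Sv" using s0 vpos by (simp add: x0_def Sv_def sum_distrib_left abs_mult abs_of_pos)
    also have "\<dots> < \<delta>"
    proof -
      have "s * Sv = \<delta> * (Sv / (Sv + 1))" using Sv0 by (simp add: s_def field_simps)
      also have "\<dots> < \<delta> * 1" using \<delta>(1) Sv0 by (intro mult_strict_left_mono) auto
      finally show ?thesis by simp
    qed
    finally have dx: "distr r x0 p < \<delta>" .
    obtain y where sol: "is_solution r \<alpha> m x0 y" using solution_exists[of r m \<alpha> x0] r2 m1 by auto
    have bnd: "\<forall>t\<ge>0. distr r (y t) p < \<rho>" using \<delta>(2) dx sol by blast
    define g where "g i t = exp (- c * t) * (y t i - p i) / v i - s / 2" for i t
    define I where "I = {..<r}"
    have dg: "(g i has_real_derivative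
        (exp (- c * t) * vfield r \<alpha> m (y t) i - c * exp (- c * t) * (y t i - p i)) / v i)
        (at t within {0..})" if "i \<in> I" "0 \<le> t" for i t
    proof -
      have dy: "((\<lambda>s. y s i) has_real_derivative vfield r \<alpha> m (y t) i) (at t within {0..})"
        using sol_deriv[OF sol that(2)] that(1) by (auto simp: I_def)
      have vne: "v i \<noteq> 0" using vpos[of i] by simp
      show ?thesis unfolding g_def
        by (auto intro!: derivative_eq_intros dy simp: field_simps vne)
    qed
    have allpos: "\<forall>t\<ge>0. \<forall>i\<in>I. g i t > 0"
    proof (rule first_violation)
      show "finite I" by (simp add: I_def)
      fix i assume i: "i \<in> I"
      show "continuous_on {0..} (g i)" by (rule DERIV_continuous_on[OF dg[OF i]]) auto
      have "y 0 i = x0 i" using sol i by (simp add: is_solution_def I_def)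
      thus "g i 0 > 0" using vpos[of i] s0 by (simp add: g_def x0_def)
    next
      fix t i assume t: "t > 0" and i: "i \<in> I" and allg: "\<forall>j\<in>I. g j t \<ge> 0" and gz: "g i t = 0"
      define E where "E = exp (- c * t)"
      have E0: "E > 0" by (simp add: E_def)
      define u where "u j = E * (y t j - p j)" for j
      have ir: "i < r" using i by (simp add: I_def)
      have ub: "u j \<ge> s / 2 * v j" if "j < r" for j
      proof -
        have "g j t \<ge> 0" using allg that by (simp add: I_def)
        hence "E * (y t j - p j) / v j \<ge> s / 2" by (simp add: g_def E_def)
        thus ?thesis using vpos[of j] by (simp add: u_def field_simps)
      qed
      have ui: "u i = s / 2 * v i"
      proof -
        have "E * (y t i - p i) / v i = s / 2" using gz by (simp add: g_def E_def)
        thus ?thesis using vpos[of i] by (simp add: u_def field_simps)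
      qed
      have key: "E * vfield r \<alpha> m (y t) i - c * u i > 0"
      proof (cases "i = 0")
        case False
        hence i1: "1 \<le> i" by simp
        have EF0: "vfield r \<alpha> m (y t) i = (y t (i - 1) - p (i - 1)) - \<alpha> i * (y t i - p i)"
          by (rule ef(1)[OF i1 ir])
        have EF: "E * vfield r \<alpha> m (y t) i = u (i - 1) - \<alpha> i * u i"
          unfolding EF0 u_def by (simp add: algebra_simps)
        have "i - 1 < r" using ir by simp
        hence "u (i - 1) \<ge> s / 2 * v (i - 1)" by (rule ub)
        moreover have "E * vfield r \<alpha> m (y t) i - c * u i = u (i - 1) - (\<alpha> i + c) * (s / 2 * v i)"
          unfolding EF ui by (simp add: algebra_simps)
        ultimately have "E * vfield r \<alpha> m (y t) i - c * u i \<ge> s / 2 * v (i - 1) - (\<alpha> i + c) * (s / 2 * v i)"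
          by linarith
        also have "s / 2 * v (i - 1) - (\<alpha> i + c) * (s / 2 * v i) = c * (s / 2 * v i)"
          unfolding vstep[OF i1 ir] by (simp add: algebra_simps)
        finally have "E * vfield r \<alpha> m (y t) i - c * u i \<ge> c * (s / 2 * v i)" .
        moreover have "c * (s / 2 * v i) > 0" using c0 s0 vpos[of i] by simp
        ultimately show ?thesis by linarith
      next
        case True
        define e where "e = y t (r - 1) - p (r - 1)"
        define H where "H = hillf m (z + e) - hillf m z"
        have EF0: "vfield r \<alpha> m (y t) 0 = (hillf m (z + (y t (r - 1) - p (r - 1))) - hillf m z) - \<alpha> 0 * (y t 0 - p 0)"
          by (rule ef(2))
        have EF: "E * vfield r \<alpha> m (y t) i = E * H - \<alpha> 0 * u 0"
          unfolding True EF0 u_def H_def e_def by (simp add: algebra_simps)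
        have ue: "E * e \<ge> s / 2" using ub[of "r - 1"] r2 vlast by (simp add: u_def e_def)
        have epos: "e > 0"
        proof (rule ccontr)
          assume "\<not> e > 0"
          hence "E * e \<le> 0" using E0 by (simp add: mult_nonneg_nonpos)
          thus False using ue s0 by simp
        qed
        have "\<bar>e\<bar> \<le> distr r (y t) p" unfolding e_def by (rule distr_ge) (use r2 in simp)
        hence e\<rho>: "\<bar>e\<bar> < \<rho>" using bnd t by (meson less_imp_le le_less_trans)
        have "\<bar>H - D * e\<bar> \<le> \<eta> * \<bar>e\<bar>" using \<rho>(2) e\<rho> by (simp add: H_def)
        hence "H \<ge> (D - \<eta>) * e" using epos by (simp add: algebra_simps abs_le_iff)
        hence "E * H \<ge> E * ((D - \<eta>) * e)" using E0 by (intro mult_left_mono) auto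
        moreover have "E * ((D - \<eta>) * e) = (D - \<eta>) * (E * e)" by simp
        moreover have "(D - \<eta>) * (E * e) \<ge> (D - \<eta>) * (s / 2)" using ue Dh by (intro mult_left_mono) auto
        ultimately have EH: "E * H \<ge> (D - \<eta>) * (s / 2)" by linarith
        have "E * vfield r \<alpha> m (y t) i - c * u i = E * H - (\<alpha> 0 + c) * (s / 2 * v 0)"
          unfolding EF using ui True by (simp add: algebra_simps)
        also have "\<dots> \<ge> (D - \<eta>) * (s / 2) - (\<alpha> 0 + c) * (s / 2 * v 0)" using EH by linarith
        also have "(D - \<eta>) * (s / 2) - (\<alpha> 0 + c) * (s / 2 * v 0) = s / 2 * ((D - \<eta>) - (\<alpha> 0 + c) * v 0)"
          by (simp add: field_simps)
        finally have "E * vfield r \<alpha> m (y t) i - c * u i \<ge> s / 2 * ((D - \<eta>) - (\<alpha> 0 + c) * v 0)" .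
        moreover have "s / 2 * ((D - \<eta>) - (\<alpha> 0 + c) * v 0) > 0" using cond0 s0 by simp
        ultimately show ?thesis by linarith
      qed
      have "(exp (- c * t) * vfield r \<alpha> m (y t) i - c * exp (- c * t) * (y t i - p i)) / v i
          = (E * vfield r \<alpha> m (y t) i - c * u i) / v i"
        by (simp add: E_def u_def)
      also have "\<dots> > 0" using key vpos[of i] by simp
      finally show "\<exists>D>0. (g i has_real_derivative D) (at t within {0..})"
        using dg[OF i] t by (intro exI[of _ "(exp (- c * t) * vfield r \<alpha> m (y t) i - c * exp (- c * t) * (y t i - p i)) / v i"]) auto
    qed
    define t1 where "t1 = max 0 (ln (2 * \<rho> / s) / c)"
    have t10: "t1 \<ge> 0" by (simp add: t1_def)
    have "g (r - 1) t1 > 0" using allpos t10 r2 by (simp add: I_def)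
    hence gt: "exp (- c * t1) * (y t1 (r - 1) - p (r - 1)) > s / 2" using vlast by (simp add: g_def)
    have "ln (2 * \<rho> / s) / c \<le> t1" by (simp add: t1_def)
    hence "c * (ln (2 * \<rho> / s) / c) \<le> c * t1" using c0 by (intro mult_left_mono) auto
    hence "c * t1 \<ge> ln (2 * \<rho> / s)" using c0 by simp
    hence "exp (c * t1) \<ge> exp (ln (2 * \<rho> / s))" by simp
    hence ex: "exp (c * t1) \<ge> 2 * \<rho> / s" using \<rho>(1) s0 by simp
    have h0: "y t1 (r - 1) - p (r - 1) = exp (c * t1) * (exp (- c * t1) * (y t1 (r - 1) - p (r - 1)))"
      by (simp add: exp_minus field_simps)
    have h1: "exp (c * t1) * (s / 2) < exp (c * t1) * (exp (- c * t1) * (y t1 (r - 1) - p (r - 1)))"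
      using gt by (intro mult_strict_left_mono) auto
    have h2: "2 * \<rho> / s * (s / 2) \<le> exp (c * t1) * (s / 2)" using ex s0 by (intro mult_right_mono) auto
    have h3: "2 * \<rho> / s * (s / 2) = \<rho>" using s0 by simp
    have big: "y t1 (r - 1) - p (r - 1) > \<rho>" using h0 h1 h2 h3 by linarith
    have "\<bar>y t1 (r - 1) - p (r - 1)\<bar> \<le> distr r (y t1) p" by (rule distr_ge) (use r2 in simp)
    moreover have "distr r (y t1) p < \<rho>" using bnd t10 by blast
    ultimately show False using big by linarith
  qed
qed

theorem lemma6p2:
  fixes r :: nat and \<alpha> :: "nat \<Rightarrow> real" and m z :: real
  assumes "r \<ge> 2" and "\<forall>i<r. \<alpha> i > 0" and "m \<ge> 1"
    and "z \<noteq> 0" and "hfun m z = (\<Prod>i<r. \<alpha> i)"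
  shows "(z > 0 \<longrightarrow>
            (deriv (hfun m) z < 0 \<longrightarrow> asymp_stable r \<alpha> m (\<lambda>i. z * V0 r \<alpha> i)) \<and>
            (deriv (hfun m) z > 0 \<longrightarrow> unstable r \<alpha> m (\<lambda>i. z * V0 r \<alpha> i)))
       \<and> (z < 0 \<longrightarrow>
            (deriv (hfun m) z > 0 \<longrightarrow> asymp_stable r \<alpha> m (\<lambda>i. z * V0 r \<alpha> i)) \<and>
            (deriv (hfun m) z < 0 \<longrightarrow> unstable r \<alpha> m (\<lambda>i. z * V0 r \<alpha> i)))"
proof -
  obtain D where dD: "(hillf m has_real_derivative D) (at z)"
    using hillf_deriv_exists[OF assms(4)] by blast
  have eq: "hillf m z = (\<Prod>i<r. \<alpha> i) * z"
    using assms(4,5) by (simp add: hfun_def field_simps)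
  have dh: "deriv (hfun m) z = (D - (\<Prod>i<r. \<alpha> i)) / z"
  proof -
    have "deriv (hfun m) z = (D * z - (\<Prod>i<r. \<alpha> i) * z) / (z * z)"
      using hfun_deriv[OF assms(4) dD] eq by simp
    also have "\<dots> = ((D - (\<Prod>i<r. \<alpha> i)) * z) / (z * z)" by (simp add: left_diff_distrib)
    also have "\<dots> = (D - (\<Prod>i<r. \<alpha> i)) / z" using assms(4) by simp
    finally show ?thesis .
  qed
  have st: "D < (\<Prod>i<r. \<alpha> i) \<Longrightarrow> asymp_stable r \<alpha> m (\<lambda>i. z * V0 r \<alpha> i)"
    by (rule stable_case[OF assms(1,2,3) eq dD])
  have un: "D > (\<Prod>i<r. \<alpha> i) \<Longrightarrow> unstable r \<alpha> m (\<lambda>i. z * V0 r \<alpha> i)"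
    by (rule unstable_case[OF assms(1,2,3) eq dD])
  show ?thesis
  proof (intro conjI impI)
    assume "z > 0" "deriv (hfun m) z < 0"
    thus "asymp_stable r \<alpha> m (\<lambda>i. z * V0 r \<alpha> i)" using st dh by (simp add: divide_less_0_iff)
  next
    assume "z > 0" "deriv (hfun m) z > 0"
    thus "unstable r \<alpha> m (\<lambda>i. z * V0 r \<alpha> i)" using un dh by (simp add: zero_less_divide_iff)
  next
    assume "z < 0" "deriv (hfun m) z > 0"
    thus "asymp_stable r \<alpha> m (\<lambda>i. z * V0 r \<alpha> i)" using st dh by (simp add: zero_less_divide_iff)
  next
    assume "z < 0" "deriv (hfun m) z < 0"
    thus "unstable r \<alpha> m (\<lambda>i. z * V0 r \<alpha> i)" using un dh by (simp add: divide_less_0_iff)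
  qed
qed

end
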